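(* Let $\sigma(u)=(u+1)\,\omega(u+1)$ for $u\ge 0$, where $\omega$ is the Buchstab function. Then for every integer $n\ge 1$ and every real $y\in[0,1]$, $$\sigma(n-y)=\sigma(n)+\sum_{j=1}^{n-1}(-1)^j\,\sigma(n-j)\,M_{j,n}(y).$$
   Context: The Buchstab function $\omega:[1,\infty)\to\mathbb{R}$ is the continuous function with $u\,\omega(u)=1$ for $u\in[1,2]$ and $u\,\omega'(u)=\omega(u-1)-\omega(u)$ for $u>2$. For integers $n>j>0$ and real $y\in[0,1]$ define $$M_{j,n}(y)=\sum_{n_1>n_2>\cdots>n_j>0}\ \prod_{i=1}^{j}\frac{z_i^{n_i}}{n_i},\qquad z_1=\frac{y}{n},\quad z_i=\frac{n+2-i}{n+1-i}\ \text{for } 1<i\le j,$$ the sum running over integers $n_1,\dots,n_j$. *)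

theory Defs
  imports "HOL-Analysis.Analysis"
begin

text \<open>Defining properties of the Buchstab function on [1,oo): continuity,
  u w(u) = 1 on [1,2], and u w'(u) = w(u-1) - w(u) for u > 2.
  Outside [1,oo) the function is fixed to 0 only to make it unique as a total function.\<close>
definition buchstab_spec :: "(real \<Rightarrow> real) \<Rightarrow> bool" where
  "buchstab_spec w \<longleftrightarrow>
     continuous_on {1..} w \<and>
     (\<forall>u\<in>{1..2}. u * w u = 1) \<and>
     (\<forall>u>2. (w has_real_derivative ((w (u - 1) - w u) / u)) (at u)) \<and>
     (\<forall>u<1. w u = 0)"

definition buchstab :: "real \<Rightarrow> real" where
  "buchstab = (THE w. buchstab_spec w)"

definition sigma_b :: "real \<Rightarrow> real" where
  "sigma_b u = (u + 1) * buchstab (u + 1)"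

text \<open>The weights z_i (list index i is 0-based, i.e. paper index i+1).\<close>
definition Mz :: "nat \<Rightarrow> real \<Rightarrow> nat \<Rightarrow> real" where
  "Mz n y i = (if i = 0 then y / real n else (real n + 1 - real i) / (real n - real i))"

definition M :: "nat \<Rightarrow> nat \<Rightarrow> real \<Rightarrow> real" where
  "M j n y = infsum (\<lambda>ns. \<Prod>i<j. Mz n y i ^ (ns ! i) / real (ns ! i))
     {ns :: nat list. length ns = j \<and> sorted_wrt (>) ns \<and> (\<forall>k\<in>set ns. k > 0)}"

end

theory Submission
  imports Defs
begin


fun G :: "nat \<Rightarrow> real \<Rightarrow> real" where
  "G 0 u = 1"
| "G (Suc k) u = 1 + integral {1..u} (\<lambda>t. G k (t - 1) / t)"

lemma integral_max1: "integral {1..u} f = integral {1..max 1 u} (f::real\<Rightarrow>real)"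
  by (cases "u \<le> 1") (auto simp: max_def)

lemma G_cont: "continuous_on UNIV (G k)"
proof (induction k)
  case 0 then show ?case by simp
next
  case (Suc k)
  let ?g = "\<lambda>t. G k (t - 1) / t"
  have gc: "continuous_on {1..b} ?g" for b
    by (intro continuous_intros continuous_on_compose2[OF Suc.IH]) auto
  have "isCont (G (Suc k)) u" for u
  proof -
    define b where "b = max 1 u + 1"
    have "continuous_on {1..b} (\<lambda>x. integral {1..x} ?g)"
      by (rule indefinite_integral_continuous_1) (rule integrable_continuous_real[OF gc])
    then have "continuous_on {..b} (\<lambda>x. integral {1..max 1 x} ?g)"
      by (rule continuous_on_compose2[where f = "\<lambda>x. max 1 x"]) (auto intro!: continuous_intros simp: b_def)
    then have "continuous_on {..b} (\<lambda>x. 1 + integral {1..x} ?g)"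
      by (subst integral_max1) (intro continuous_intros)
    then have "continuous (at u) (\<lambda>x. 1 + integral {1..x} ?g)"
      by (rule continuous_on_interior) (auto simp: b_def)
    moreover have B: "G (Suc k) = (\<lambda>x. 1 + integral {1..x} ?g)" by (rule ext) simp
    ultimately show ?thesis unfolding B by (simp only:)
  qed
  then show ?case by (intro continuous_at_imp_continuous_on ballI)
qed

lemma G_Suc_eq: "u \<le> real k + 1 \<Longrightarrow> G (Suc k) u = G k u"
proof (induction k arbitrary: u)
  case 0
  show ?case
  proof (cases "u = 1")
    case True then show ?thesis by simp
  next
    case False
    then have "{1..u} = {}" using 0 by auto
    then show ?thesis by simp
  qed
next
  case (Suc k)
  let ?g1 = "\<lambda>t. G (Suc k) (t - 1) / t" and ?g0 = "\<lambda>t. G k (t - 1) / t"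
  have "integral {1..u} ?g1 = integral {1..u} ?g0"
    by (rule integral_cong) (use Suc in auto)
  then show ?case by simp
qed

lemma G_mono_eq: "u \<le> real k + 1 \<Longrightarrow> k \<le> m \<Longrightarrow> G m u = G k u"
proof (induction m)
  case 0 then show ?case by simp
next
  case (Suc m)
  show ?case
  proof (cases "k = Suc m")
    case True then show ?thesis by simp
  next
    case False
    then have km: "k \<le> m" using Suc.prems by simp
    then have "real k \<le> real m" by simp
    then have "G (Suc m) u = G m u" using Suc.prems by (intro G_Suc_eq) linarith
    then show ?thesis using Suc km by simp
  qed
qed

definition Sg :: "real \<Rightarrow> real" where "Sg u = G (nat \<lceil>u\<rceil>) u"

lemma Sg_eq: assumes "u \<le> real k + 1" shows "Sg u = G k u"
proof -
  have a1: "u \<le> real_of_int \<lceil>u\<rceil>" by (rule le_of_int_ceiling)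
  have a2: "real_of_int \<lceil>u\<rceil> \<le> real (nat \<lceil>u\<rceil>)" by (cases "\<lceil>u\<rceil> \<ge> 0") auto
  have a: "u \<le> real (nat \<lceil>u\<rceil>) + 1" using a1 a2 by linarith
  show ?thesis
  proof (cases "nat \<lceil>u\<rceil> \<le> k")
    case True show ?thesis unfolding Sg_def by (rule sym[OF G_mono_eq[OF a True]])
  next
    case False
    then have "k \<le> nat \<lceil>u\<rceil>" by (meson nat_le_linear)
    then show ?thesis unfolding Sg_def by (rule G_mono_eq[OF assms])
  qed
qed

lemma Sg_cont: "isCont Sg u"
proof -
  define k where "k = nat \<lceil>u\<rceil>"
  have "isCont (G k) u" using G_cont continuous_on_eq_continuous_at by blast
  moreover have "eventually (\<lambda>x. Sg x = G k x) (nhds u)"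
  proof (rule eventually_nhds_in_open[THEN eventually_mono])
    show "open {..<real k + 1}" by simp
    show "u \<in> {..<real k + 1}" unfolding k_def by simp linarith
  next
    fix z assume "z \<in> {..<real k + 1}"
    then show "Sg z = G k z" by (intro Sg_eq) simp
  qed
  ultimately show ?thesis using isCont_cong by blast
qed

lemma Sg_01: "u \<le> 1 \<Longrightarrow> Sg u = 1"
  using Sg_eq[of u 0] by simp

lemma G_deriv:
  assumes "x > 1"
  shows "(G (Suc k) has_real_derivative G k (x - 1) / x) (at x)"
proof -
  let ?g = "\<lambda>t. G k (t - 1) / t"
  have gc: "continuous_on {1..x+1} ?g"
    by (intro continuous_intros continuous_on_compose2[OF G_cont[of k]]) auto
  have "((\<lambda>u. integral {1..u} ?g) has_real_derivative ?g x) (at x within {1..x+1})"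
    by (rule integral_has_real_derivative[OF gc]) (use assms in auto)
  moreover have "x \<in> interior {1..x+1}" using assms by simp
  then have "at x within {1..x+1} = at x" by (rule at_within_interior)
  ultimately have "((\<lambda>u. integral {1..u} ?g) has_real_derivative ?g x) (at x)"
    by (simp only:)
  then have "((\<lambda>u. 1 + integral {1..u} ?g) has_real_derivative 0 + ?g x) (at x)"
    by (rule DERIV_add[OF DERIV_const])
  moreover have B: "G (Suc k) = (\<lambda>u. 1 + integral {1..u} ?g)" by (rule ext) simp
  ultimately show ?thesis unfolding B by (simp only: add_0_left)
qed

lemma Sg_deriv:
  assumes "x > 1"
  shows "(Sg has_real_derivative Sg (x - 1) / x) (at x)"
proof -
  define k where "k = nat \<lceil>x\<rceil>"
  have xk: "x < real k + 1" unfolding k_def by linarith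
  have "(G (Suc k) has_real_derivative G k (x - 1) / x) (at x)" by (rule G_deriv[OF assms])
  moreover have "G k (x - 1) = Sg (x - 1)" using Sg_eq[of "x - 1" k] xk by simp
  ultimately have d: "(G (Suc k) has_real_derivative Sg (x - 1) / x) (at x)" by simp
  show ?thesis
  proof (rule has_field_derivative_transform_within_open[OF d, of "{..<real k + 1}"])
    fix z assume "z \<in> {..<real k + 1}"
    then have "z \<le> real (Suc k) + 1" by simp
    then show "G (Suc k) z = Sg z" by (rule Sg_eq[symmetric])
  qed (use xk in auto)
qed




definition Wb :: "real \<Rightarrow> real" where
  "Wb v = (if v < 1 then 0 else Sg (v - 1) / v)"

lemma Wb_spec: "buchstab_spec Wb"
  unfolding buchstab_spec_def
proof (intro conjI ballI allI impI)
  have cS: "continuous_on UNIV Sg" by (intro continuous_at_imp_continuous_on ballI Sg_cont)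
  have "continuous_on {1..} (\<lambda>v. Sg (v - 1) / v)"
    by (intro continuous_on_divide continuous_on_compose2[OF cS] continuous_intros) auto
  then show "continuous_on {1..} Wb"
    by (rule continuous_on_eq) (simp add: Wb_def)
next
  fix u :: real assume "u \<in> {1..2}"
  then have "u \<noteq> 0" "\<not> u < 1" "u - 1 \<le> 1" by auto
  then show "u * Wb u = 1" by (simp add: Wb_def Sg_01)
next
  fix u :: real assume "u < 1" then show "Wb u = 0" by (simp add: Wb_def)
next
  fix u :: real assume u: "u > 2"
  have d1: "(Sg has_real_derivative Sg (u - 1 - 1) / (u - 1)) (at (u - 1))"
    by (rule Sg_deriv) (use u in simp)
  have a: "((\<lambda>v. v - 1) has_real_derivative 1) (at u)" by (auto intro!: derivative_eq_intros)
  have b: "((\<lambda>v. Sg (v - 1)) has_real_derivative Sg (u - 1 - 1) / (u - 1) * 1) (at u)"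
    by (rule DERIV_chain2[OF d1 a])
  have "((\<lambda>v. Sg (v - 1) / v) has_real_derivative
          ((Sg (u - 1 - 1) / (u - 1) * 1) * u - Sg (u - 1) * 1) / (u * u)) (at u)"
    by (rule DERIV_divide[OF b DERIV_ident]) (use u in simp)
  moreover have "((Sg (u - 1 - 1) / (u - 1) * 1) * u - Sg (u - 1) * 1) / (u * u) = (Wb (u - 1) - Wb u) / u"
    using u by (simp add: Wb_def field_simps)
  ultimately have d: "((\<lambda>v. Sg (v - 1) / v) has_real_derivative (Wb (u - 1) - Wb u) / u) (at u)"
    by simp
  show "(Wb has_real_derivative (Wb (u - 1) - Wb u) / u) (at u)"
    by (rule has_field_derivative_transform_within_open[OF d, of "{1<..}"]) (use u in \<open>auto simp: Wb_def\<close>)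
qed

lemma spec_unique:
  assumes w1: "buchstab_spec w1" and w2: "buchstab_spec w2"
  shows "w1 = w2"
proof -
  define d where "d u = u * (w1 u - w2 u)" for u
  have c1: "continuous_on {1..} w1" and c2: "continuous_on {1..} w2"
    using w1 w2 by (auto simp: buchstab_spec_def)
  have dc: "continuous_on {1..} d" unfolding d_def by (intro continuous_intros c1 c2)
  have D: "\<And>u. u > 2 \<Longrightarrow> (d has_real_derivative (w1 (u - 1) - w2 (u - 1))) (at u)"
  proof -
    fix u :: real assume u: "u > 2"
    have "(w1 has_real_derivative ((w1 (u - 1) - w1 u) / u)) (at u)"
      "(w2 has_real_derivative ((w2 (u - 1) - w2 u) / u)) (at u)"
      using w1 w2 u by (auto simp: buchstab_spec_def)
    from DERIV_mult[OF DERIV_ident DERIV_diff[OF this]]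
    have "(d has_real_derivative 1 * (w1 u - w2 u) + u * ((w1 (u - 1) - w1 u) / u - (w2 (u - 1) - w2 u) / u)) (at u)"
      unfolding d_def[abs_def] by (simp add: mult.commute)
    moreover have "1 * (w1 u - w2 u) + u * ((w1 (u - 1) - w1 u) / u - (w2 (u - 1) - w2 u) / u) = w1 (u - 1) - w2 (u - 1)"
      using u by (simp add: field_simps)
    ultimately show "(d has_real_derivative (w1 (u - 1) - w2 (u - 1))) (at u)" by simp
  qed
  have Z: "\<forall>u\<in>{1..real k + 2}. w1 u = w2 u" for k :: nat
  proof (induction k)
    case 0
    show ?case
    proof
      fix u :: real assume u: "u \<in> {1..real 0 + 2}"
      then have "u * w1 u = 1" "u * w2 u = 1" using w1 w2 by (auto simp: buchstab_spec_def)
      moreover have "u \<noteq> 0" using u by auto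
      ultimately show "w1 u = w2 u" by (metis mult_left_cancel)
    qed
  next
    case (Suc k)
    show ?case
    proof
      fix u :: real assume u: "u \<in> {1..real (Suc k) + 2}"
      show "w1 u = w2 u"
      proof (cases "u \<le> real k + 2")
        case True then show ?thesis using Suc.IH u by auto
      next
        case False
        then have lt: "real k + 2 < u" by simp
        have "d u = d (real k + 2)"
        proof (rule DERIV_isconst_end[OF lt])
          show "continuous_on {real k + 2..u} d" by (rule continuous_on_subset[OF dc]) auto
        next
          fix x assume x: "real k + 2 < x" "x < u"
          have "w1 (x - 1) = w2 (x - 1)" using Suc.IH x u by auto
          with D[of x] x show "(d has_real_derivative 0) (at x)" by simp
        qed
        moreover have "d (real k + 2) = 0" using Suc.IH by (simp add: d_def)
        ultimately have "u * (w1 u - w2 u) = 0" by (simp add: d_def)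
        moreover have "u \<noteq> 0" using u by auto
        ultimately show ?thesis by simp
      qed
    qed
  qed
  show ?thesis
  proof
    fix u :: real
    show "w1 u = w2 u"
    proof (cases "u < 1")
      case True then show ?thesis using w1 w2 by (simp add: buchstab_spec_def)
    next
      case False
      have "u \<le> real (nat \<lceil>u\<rceil>) + 2"
      proof -
        have a1: "u \<le> real_of_int \<lceil>u\<rceil>" by (rule le_of_int_ceiling)
        have a2: "real_of_int \<lceil>u\<rceil> \<le> real (nat \<lceil>u\<rceil>)" by (cases "\<lceil>u\<rceil> \<ge> 0") auto
        show ?thesis using a1 a2 by linarith
      qed
      then show ?thesis using Z[of "nat \<lceil>u\<rceil>"] False by auto
    qed
  qed
qed

lemma buchstab_spec: "buchstab_spec buchstab"
  unfolding buchstab_def by (rule theI[of buchstab_spec Wb, OF Wb_spec]) (rule spec_unique[OF _ Wb_spec])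

lemma sigma_01: "0 \<le> u \<Longrightarrow> u \<le> 1 \<Longrightarrow> sigma_b u = 1"
  using buchstab_spec unfolding buchstab_spec_def sigma_b_def by auto

lemma sigma_cont: "continuous_on {0..} sigma_b"
proof -
  have "continuous_on {1..} buchstab" using buchstab_spec unfolding buchstab_spec_def by auto
  then have "continuous_on {0..} (\<lambda>u. buchstab (u + 1))"
    by (rule continuous_on_compose2) (auto intro!: continuous_intros)
  then show ?thesis unfolding sigma_b_def[abs_def] by (intro continuous_intros)
qed

lemma sigma_deriv:
  assumes "x > 1"
  shows "(sigma_b has_real_derivative sigma_b (x - 1) / x) (at x)"
proof -
  have "\<forall>u>2. (buchstab has_real_derivative ((buchstab (u - 1) - buchstab u) / u)) (at u)"
    using buchstab_spec unfolding buchstab_spec_def by blast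
  then have "(buchstab has_real_derivative ((buchstab (x + 1 - 1) - buchstab (x + 1)) / (x + 1))) (at (x + 1))"
    using assms by (metis add_less_cancel_right one_add_one)
  note hb = this
  have a: "((\<lambda>u. u + 1) has_real_derivative 1) (at x)" by (auto intro!: derivative_eq_intros)
  have b: "((\<lambda>u. buchstab (u + 1)) has_real_derivative ((buchstab (x + 1 - 1) - buchstab (x + 1)) / (x + 1)) * 1) (at x)"
    by (rule DERIV_chain2[OF hb a])
  have "((\<lambda>u. (u + 1) * buchstab (u + 1)) has_real_derivative
      (1 + 0) * buchstab (x + 1) + (x + 1) * ((buchstab (x + 1 - 1) - buchstab (x + 1)) / (x + 1) * (1 + 0))) (at x)"
    using DERIV_mult[OF a b] by simp
  moreover have "(1 + 0) * buchstab (x + 1) + (x + 1) * ((buchstab (x + 1 - 1) - buchstab (x + 1)) / (x + 1) * (1 + 0))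
     = sigma_b (x - 1) / x"
    using assms by (simp add: sigma_b_def field_simps)
  ultimately show ?thesis unfolding sigma_b_def[abs_def] by simp
qed




definition Lset :: "nat \<Rightarrow> nat list set" where
  "Lset j = {ns. length ns = j \<and> sorted_wrt (>) ns \<and> (\<forall>k\<in>set ns. k > 0)}"
definition Ls :: "nat \<Rightarrow> nat \<Rightarrow> nat list set" where
  "Ls j N = {ns \<in> Lset j. \<forall>k\<in>set ns. k < N}"
definition tm :: "(nat \<Rightarrow> real) \<Rightarrow> nat \<Rightarrow> nat list \<Rightarrow> real" where
  "tm z j ns = (\<Prod>i<j. z i ^ (ns ! i) / real (ns ! i))"

fun Tsum :: "(nat \<Rightarrow> real) \<Rightarrow> nat \<Rightarrow> nat \<Rightarrow> real" where
  "Tsum z 0 N = 1"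
| "Tsum z (Suc j) N = (\<Sum>k\<in>{1..<N}. z 0 ^ k / real k * Tsum (\<lambda>i. z (Suc i)) j k)"

lemma M_alt: "M j n y = infsum (tm (Mz n y) j) (Lset j)"
  unfolding M_def tm_def[abs_def] Lset_def by simp

lemma Ls_0: "Ls 0 N = {[]}"
  by (auto simp: Ls_def Lset_def)

lemma Ls_Suc: "Ls (Suc j) N = (\<Union>k\<in>{1..<N}. (#) k ` Ls j k)"
proof (rule set_eqI)
  fix xs :: "nat list"
  show "xs \<in> Ls (Suc j) N \<longleftrightarrow> xs \<in> (\<Union>k\<in>{1..<N}. (#) k ` Ls j k)"
  proof
    assume "xs \<in> Ls (Suc j) N"
    then obtain k ts where xs: "xs = k # ts" and H: "length ts = j" "sorted_wrt (>) (k # ts)"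
       "\<forall>x\<in>set (k # ts). x > 0" "\<forall>x\<in>set (k # ts). x < N"
      by (auto simp: Ls_def Lset_def length_Suc_conv)
    then have "ts \<in> Ls j k" by (auto simp: Ls_def Lset_def)
    moreover have "k \<in> {1..<N}" using H by auto
    ultimately show "xs \<in> (\<Union>k\<in>{1..<N}. (#) k ` Ls j k)" using xs by blast
  next
    assume "xs \<in> (\<Union>k\<in>{1..<N}. (#) k ` Ls j k)"
    then obtain k ts where xs: "xs = k # ts" and k: "k \<in> {1..<N}" and ts: "ts \<in> Ls j k" by blast
    show "xs \<in> Ls (Suc j) N" using k ts unfolding xs by (auto simp: Ls_def Lset_def)
  qed
qed

lemma tm_Cons: "tm z (Suc j) (k # ts) = z 0 ^ k / real k * tm (\<lambda>i. z (Suc i)) j ts"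
  unfolding tm_def by (subst prod.lessThan_Suc_shift) simp

lemma finite_Ls: "finite (Ls j N)"
proof (rule finite_subset)
  show "Ls j N \<subseteq> {xs. set xs \<subseteq> {..<N} \<and> length xs = j}" by (auto simp: Ls_def Lset_def)
  show "finite {xs. set xs \<subseteq> {..<N} \<and> length xs = j}" by (rule finite_lists_length_eq) simp
qed

lemma Tsum_eq: "Tsum z j N = sum (tm z j) (Ls j N)"
proof (induction j arbitrary: z N)
  case 0 then show ?case by (simp add: Ls_0 tm_def)
next
  case (Suc j)
  have "sum (tm z (Suc j)) (Ls (Suc j) N) = (\<Sum>k\<in>{1..<N}. sum (tm z (Suc j)) ((#) k ` Ls j k))"
    unfolding Ls_Suc by (rule sum.UNION_disjoint) (auto simp: finite_Ls)
  also have "\<dots> = (\<Sum>k\<in>{1..<N}. \<Sum>ts\<in>Ls j k. z 0 ^ k / real k * tm (\<lambda>i. z (Suc i)) j ts)"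
  proof (rule sum.cong[OF refl])
    fix k assume "k \<in> {1..<N}"
    have "sum (tm z (Suc j)) ((#) k ` Ls j k) = sum (tm z (Suc j) \<circ> (#) k) (Ls j k)"
      by (rule sum.reindex) (auto simp: inj_on_def)
    then show "sum (tm z (Suc j)) ((#) k ` Ls j k) = (\<Sum>ts\<in>Ls j k. z 0 ^ k / real k * tm (\<lambda>i. z (Suc i)) j ts)"
      by (simp add: tm_Cons)
  qed
  also have "\<dots> = (\<Sum>k\<in>{1..<N}. z 0 ^ k / real k * Tsum (\<lambda>i. z (Suc i)) j k)"
    by (rule sum.cong[OF refl]) (simp add: Suc.IH sum_distrib_left)
  finally show ?case by simp
qed

lemma Tsum_bound:
  assumes "\<And>i. i < j \<Longrightarrow> z i \<ge> 1"
  shows "0 \<le> Tsum z j N \<and> Tsum z j N \<le> real N ^ j * (\<Prod>i<j. z i) ^ N"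
  using assms
proof (induction j arbitrary: z N)
  case 0 then show ?case by simp
next
  case (Suc j)
  let ?z' = "\<lambda>i. z (Suc i)"
  have z0: "z 0 \<ge> 1" using Suc.prems by simp
  have IH: "0 \<le> Tsum ?z' j k \<and> Tsum ?z' j k \<le> real k ^ j * (\<Prod>i<j. ?z' i) ^ k" for k
    by (rule Suc.IH) (use Suc.prems in simp)
  have P1: "(\<Prod>i<j. ?z' i) \<ge> 1" using Suc.prems by (intro prod_ge_1) auto
  have tb: "0 \<le> z 0 ^ k / real k * Tsum ?z' j k \<and>
            z 0 ^ k / real k * Tsum ?z' j k \<le> z 0 ^ N * (real N ^ j * (\<Prod>i<j. ?z' i) ^ N)"
    if k: "k \<in> {1..<N}" for k
  proof -
    have "z 0 ^ k / real k \<le> z 0 ^ k" using k z0 by (simp add: divide_le_eq)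
    also have "\<dots> \<le> z 0 ^ N" using k z0 by (intro power_increasing) auto
    finally have A: "z 0 ^ k / real k \<le> z 0 ^ N" .
    have B: "Tsum ?z' j k \<le> real N ^ j * (\<Prod>i<j. ?z' i) ^ N"
    proof -
      have "Tsum ?z' j k \<le> real k ^ j * (\<Prod>i<j. ?z' i) ^ k" using IH by blast
      also have "\<dots> \<le> real N ^ j * (\<Prod>i<j. ?z' i) ^ N"
        using k P1 by (intro mult_mono power_mono power_increasing) auto
      finally show ?thesis .
    qed
    have n0: "0 \<le> z 0 ^ k / real k" using z0 by simp
    have T0: "0 \<le> Tsum ?z' j k" using IH by blast
    have "z 0 ^ k / real k * Tsum ?z' j k \<le> z 0 ^ N * (real N ^ j * (\<Prod>i<j. ?z' i) ^ N)"
      by (rule mult_mono[OF A B]) (use T0 z0 in auto)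
    moreover have "0 \<le> z 0 ^ k / real k * Tsum ?z' j k" by (rule mult_nonneg_nonneg[OF n0 T0])
    ultimately show ?thesis by blast
  qed
  define C where "C = z 0 ^ N * (real N ^ j * (\<Prod>i<j. ?z' i) ^ N)"
  have C0: "C \<ge> 0" unfolding C_def using z0 P1 by simp
  have "Tsum z (Suc j) N \<le> (\<Sum>k\<in>{1..<N}. C)"
    unfolding Tsum.simps C_def by (rule sum_mono) (use tb in blast)
  also have "\<dots> = real (N - 1) * C" by simp
  also have "\<dots> \<le> real N * C" using C0 by (intro mult_right_mono) auto
  also have "\<dots> = real N * (z 0 ^ N * (real N ^ j * (\<Prod>i<j. ?z' i) ^ N))" by (simp add: C_def)
  also have "\<dots> = real N ^ Suc j * (\<Prod>i<Suc j. z i) ^ N"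
    by (simp only: prod.lessThan_Suc_shift power_mult_distrib power_Suc) (simp add: ac_simps)
  finally have "Tsum z (Suc j) N \<le> real N ^ Suc j * (\<Prod>i<Suc j. z i) ^ N" .
  moreover have "0 \<le> Tsum z (Suc j) N" unfolding Tsum.simps by (rule sum_nonneg) (use tb in blast)
  ultimately show ?case by blast
qed




definition wn :: "nat \<Rightarrow> nat \<Rightarrow> real" where
  "wn n i = (real n - real i) / (real n - 1 - real i)"

lemma Mz_Suc: "Mz n y (Suc i) = wn n i" by (simp add: Mz_def wn_def algebra_simps)
lemma Mz_0: "Mz n y 0 = y / real n" by (simp add: Mz_def)

lemma wn_ge1: assumes "Suc i < n" shows "wn n i \<ge> 1"
proof -
  have "real (Suc i) < real n" using assms by (simp only: of_nat_less_iff)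
  then have "0 < real n - 1 - real i" by simp
  then show ?thesis by (simp add: wn_def le_divide_eq)
qed

lemma wn_prod: "j < n \<Longrightarrow> (\<Prod>i<j. wn n i) = real n / (real n - real j)"
proof (induction j)
  case 0 then show ?case by simp
next
  case (Suc j)
  have "real (Suc j) < real n" using Suc.prems by (simp only: of_nat_less_iff)
  then have a: "real n - real j - 1 > 0" by simp
  have "(\<Prod>i<Suc j. wn n i) = real n / (real n - real j) * wn n j" using Suc by simp
  also have "\<dots> = real n / (real n - 1 - real j)"
  proof -
    have d1: "real n - real j \<noteq> 0" and d2: "real n - 1 - real j \<noteq> 0" using a by auto
    have g: "\<And>A B C::real. B \<noteq> 0 \<Longrightarrow> A / B * (B / C) = A / C"
      by (simp add: divide_simps)
    show ?thesis unfolding wn_def using g[OF d1, of "real n" "real n - 1 - real j"] by simp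
  qed
  also have "\<dots> = real n / (real n - real (Suc j))" by simp
  finally show ?case .
qed

lemma wn_shift: "1 \<le> n \<Longrightarrow> (\<lambda>i. wn n (Suc i)) = wn (n - 1)"
  by (rule ext) (simp add: wn_def of_nat_diff algebra_simps)

lemma wn_0: "wn n 0 = real n / (real n - 1)" by (simp add: wn_def)

definition cf :: "nat \<Rightarrow> nat \<Rightarrow> nat \<Rightarrow> real" where
  "cf j n N = (1 / real n) ^ N / real N * Tsum (wn n) j N"

lemma cf_0: "cf j n 0 = 0" by (simp add: cf_def)

lemma wn_ge1_j: "j + 1 < n \<Longrightarrow> i < j \<Longrightarrow> wn n i \<ge> 1"
  by (rule wn_ge1) simp

lemma cf_nonneg: assumes "j + 1 < n" shows "0 \<le> cf j n N"
proof -
  have "0 \<le> Tsum (wn n) j N" using Tsum_bound[of j "wn n" N] wn_ge1_j[OF assms] by blast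
  then show ?thesis by (simp add: cf_def)
qed

lemma SP: "\<bar>x\<bar> < 1 \<Longrightarrow> summable (\<lambda>N. real N ^ j * x ^ N)"
proof (induction j arbitrary: x)
  case 0 then show ?case by (simp add: summable_geometric)
next
  case (Suc j)
  have d: "summable (\<lambda>N. diffs (\<lambda>N. real N ^ j) N * y ^ N)" if "\<bar>y\<bar> < 1" for y :: real
    by (rule termdiff_converges[where K=1]) (use that Suc.IH in auto)
  have "summable (\<lambda>N. real (Suc N) ^ Suc j * \<bar>x\<bar> ^ N)"
    using d[of "\<bar>x\<bar>"] Suc.prems by (simp add: diffs_def)
  then show ?case
  proof (rule summable_comparison_test')
    fix N :: nat
    have "real N ^ Suc j \<le> real (Suc N) ^ Suc j" by (rule power_mono) auto
    then show "norm (real N ^ Suc j * x ^ N) \<le> real (Suc N) ^ Suc j * \<bar>x\<bar> ^ N"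
      by (simp add: abs_mult power_abs mult_right_mono del: of_nat_Suc power_Suc)
  qed
qed

lemma cf_summable:
  assumes "Suc j \<le> n - 1" "\<bar>x\<bar> \<le> 3/2"
  shows "summable (\<lambda>N. cf j n N * x ^ N)"
proof -
  have n: "j + 2 \<le> n" using assms by simp
  have w1: "\<And>i. i < j \<Longrightarrow> wn n i \<ge> 1" using n by (intro wn_ge1) simp
  have P: "(\<Prod>i<j. wn n i) = real n / (real n - real j)" using n by (intro wn_prod) simp
  have "real (j + 2) \<le> real n" using n by (simp only: of_nat_le_iff)
  then have nj: "real n - real j \<ge> 2" by simp
  have npos: "real n > 0" using n by simp
  define r where "r = 3/2 / (real n - real j)"
  have r0: "0 \<le> r" and r1: "r \<le> 3/4" using nj by (auto simp: r_def divide_le_eq)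
  show ?thesis
  proof (rule summable_comparison_test'[OF SP[of "3/4" j]])
    fix N :: nat
    have T: "0 \<le> Tsum (wn n) j N \<and> Tsum (wn n) j N \<le> real N ^ j * (\<Prod>i<j. wn n i) ^ N"
      by (rule Tsum_bound) (use w1 in auto)
    have a0: "0 \<le> (1 / real n) ^ N" by simp
    have a1: "(1 / real n) ^ N / real N \<le> (1 / real n) ^ N"
    proof (cases "N = 0")
      case False
      then have "1 \<le> real N" by simp
      then show ?thesis using mult_left_mono[of 1 "real N" "(1 / real n) ^ N"] a0 by (simp add: divide_le_eq)
    qed simp
    have "norm (cf j n N * x ^ N) = cf j n N * \<bar>x\<bar> ^ N"
      using cf_nonneg[of j n N] n by (simp add: abs_mult power_abs)
    also have "\<dots> \<le> ((1 / real n) ^ N * (real N ^ j * (real n / (real n - real j)) ^ N)) * (3/2) ^ N"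
      unfolding cf_def using T a0 a1 P assms(2)
      by (intro mult_mono power_mono) (auto intro: mult_nonneg_nonneg)
    also have "\<dots> = real N ^ j * r ^ N"
      using npos by (simp add: r_def power_mult_distrib[symmetric] field_simps)
    also have "\<dots> \<le> real N ^ j * (3/4) ^ N"
      using r0 r1 by (intro mult_left_mono power_mono) auto
    finally show "norm (cf j n N * x ^ N) \<le> real N ^ j * (3/4) ^ N" .
  qed simp
qed




lemma M_0: "M 0 n y = 1"
proof -
  have "Lset 0 = {[]}" by (auto simp: Lset_def)
  then show ?thesis by (simp add: M_alt tm_def)
qed

lemma M_series:
  assumes y0: "0 \<le> y" and y1: "y \<le> 1" and jn: "Suc j \<le> n - 1"
  shows "M (Suc j) n y = (\<Sum>N. cf j n N * y ^ N)"
proof -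
  define z where "z = Mz n y"
  define a where "a N = cf j n N * y ^ N" for N
  have n: "j + 2 \<le> n" using jn by simp
  have sa: "summable a" unfolding a_def by (rule cf_summable[OF jn]) (use y0 y1 in simp)
  have a0: "0 \<le> a N" for N unfolding a_def using cf_nonneg[of j n N] n y0 by simp
  have tm_nn: "0 \<le> tm z (Suc j) ns" for ns
    unfolding tm_def
  proof (intro prod_nonneg ballI)
    fix i assume "i \<in> {..<Suc j}"
    then have i: "i < Suc j" by simp
    have "0 \<le> z i"
    proof (cases i)
      case 0 then show ?thesis using y0 by (simp add: z_def Mz_0)
    next
      case (Suc i')
      then have "wn n i' \<ge> 1" using i n by (intro wn_ge1) simp
      then show ?thesis using Suc by (simp add: z_def Mz_Suc)
    qed
    then show "0 \<le> z i ^ (ns ! i) / real (ns ! i)" by simp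
  qed
  have zs: "(\<lambda>i. z (Suc i)) = wn n" by (rule ext) (simp add: z_def Mz_Suc)
  have LK: "sum (tm z (Suc j)) (Ls (Suc j) K) = (\<Sum>N<K. a N)" for K
  proof -
    have "sum (tm z (Suc j)) (Ls (Suc j) K) = Tsum z (Suc j) K" by (simp add: Tsum_eq)
    also have "\<dots> = (\<Sum>k\<in>{1..<K}. a k)"
      unfolding Tsum.simps zs
      by (rule sum.cong[OF refl]) (simp add: a_def cf_def z_def Mz_0 power_divide)
    also have "\<dots> = (\<Sum>k\<in>{0..<K}. a k)"
      using sum_shift_lb_Suc0_0_upt[of a K] by (simp add: a_def cf_0)
    finally show ?thesis by (simp add: atLeast0LessThan)
  qed
  have sub: "\<exists>K. F \<subseteq> Ls (Suc j) K" if F: "finite F" "F \<subseteq> Lset (Suc j)" for F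
  proof -
    have "finite (\<Union> (set ` F))" using F by auto
    then obtain K where K: "\<Union> (set ` F) \<subseteq> {..<K}" using finite_nat_bounded by blast
    show ?thesis by (rule exI[of _ K]) (use F K in \<open>auto simp: Ls_def\<close>)
  qed
  have bdd: "sum (tm z (Suc j)) F \<le> suminf a" if F: "finite F" "F \<subseteq> Lset (Suc j)" for F
  proof -
    obtain K where K: "F \<subseteq> Ls (Suc j) K" using sub[OF F] by blast
    have "sum (tm z (Suc j)) F \<le> sum (tm z (Suc j)) (Ls (Suc j) K)"
      by (rule sum_mono2[OF finite_Ls K]) (rule tm_nn)
    also have "\<dots> = (\<Sum>N<K. a N)" by (rule LK)
    also have "\<dots> \<le> suminf a" by (rule sum_le_suminf[OF sa]) (auto intro: a0)
    finally show ?thesis .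
  qed
  have summ: "tm z (Suc j) summable_on Lset (Suc j)"
    by (rule nonneg_bdd_above_summable_on) (auto intro: tm_nn bdd_aboveI bdd)
  have le1: "infsum (tm z (Suc j)) (Lset (Suc j)) \<le> suminf a"
    by (rule infsum_le_finite_sums[OF summ]) (rule bdd)
  have le2: "suminf a \<le> infsum (tm z (Suc j)) (Lset (Suc j))"
  proof (rule suminf_le_const[OF sa])
    fix K
    have "(\<Sum>N<K. a N) = infsum (tm z (Suc j)) (Ls (Suc j) K)" by (simp add: LK finite_Ls)
    also have "\<dots> \<le> infsum (tm z (Suc j)) (Lset (Suc j))"
      by (rule infsum_mono_neutral) (use summ finite_Ls tm_nn in \<open>auto simp: Ls_def\<close>)
    finally show "sum a {..<K} \<le> infsum (tm z (Suc j)) (Lset (Suc j))" .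
  qed
  have aeq: "a = (\<lambda>N. cf j n N * y ^ N)" by (rule ext) (simp add: a_def)
  show ?thesis using le1 le2 unfolding aeq by (simp add: M_alt z_def)
qed

lemma P_deriv:
  assumes "Suc j \<le> n - 1" "\<bar>x\<bar> < 3/2"
  shows "((\<lambda>x. \<Sum>N. cf j n N * x ^ N) has_real_derivative (\<Sum>N. diffs (cf j n) N * x ^ N)) (at x)"
  by (rule termdiffs_strong[where K="3/2"]) (use cf_summable[OF assms(1), of "3/2"] assms(2) in auto)

lemma diffs_summable:
  assumes "Suc j \<le> n - 1" "\<bar>x\<bar> < 3/2"
  shows "summable (\<lambda>N. diffs (cf j n) N * x ^ N)"
  by (rule termdiff_converges[where K="3/2"]) (use cf_summable[OF assms(1)] assms(2) in auto)

lemma Tsum_Suc_diff: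
  "Tsum z (Suc j) (Suc N) - Tsum z (Suc j) N = z 0 ^ N / real N * Tsum (\<lambda>i. z (Suc i)) j N"
proof (cases N)
  case 0 then show ?thesis by simp
next
  case (Suc N')
  then show ?thesis by (simp add: sum.atLeastLessThan_Suc)
qed

lemma ident:
  assumes jn: "Suc j \<le> n - 1" and x0: "0 \<le> x" and x1: "x \<le> 1"
  shows "(\<Sum>N. diffs (cf j n) N * x ^ N) * (real n - x) = M j (n - 1) x"
proof -
  have n: "j + 2 \<le> n" using jn by simp
  have npos: "real n > 1" using n by simp
  define T where "T = Tsum (wn n) j"
  define b where "b N = diffs (cf j n) N * x ^ N" for N
  define g where "g N = (1 / real n) ^ N * T N * x ^ N" for N
  have bN: "b N = (1 / real n) ^ Suc N * T (Suc N) * x ^ N" for N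
    unfolding b_def diffs_def cf_def T_def by (simp del: of_nat_Suc power_Suc)
  have sb: "summable b" unfolding b_def by (rule diffs_summable[OF jn]) (use x0 x1 in simp)
  have gS: "g (Suc N) = x * b N" for N unfolding g_def bN by (simp add: ac_simps)
  have nb: "real n * b N = (1 / real n) ^ N * T (Suc N) * x ^ N" for N
    unfolding bN using npos by (simp add: field_simps)
  have sxb: "summable (\<lambda>N. x * b N)" by (rule summable_mult[OF sb])
  have snb: "summable (\<lambda>N. real n * b N)" by (rule summable_mult[OF sb])
  have sg: "summable g" using sxb by (simp add: gS[symmetric] summable_Suc_iff)
  have "suminf b * (real n - x) = (\<Sum>N. real n * b N) - (\<Sum>N. x * b N)"
    using sb by (simp add: suminf_mult algebra_simps)
  also have "(\<Sum>N. x * b N) = suminf g - g 0"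
    using suminf_split_head[OF sg] by (simp add: gS)
  also have "(\<Sum>N. real n * b N) - (suminf g - g 0) = (\<Sum>N. real n * b N - g N) + g 0"
    using suminf_diff[OF snb sg] by simp
  also have "(\<lambda>N. real n * b N - g N) = (\<lambda>N. (1 / real n) ^ N * (T (Suc N) - T N) * x ^ N)"
    by (rule ext) (simp add: nb g_def algebra_simps)
  finally have main: "suminf b * (real n - x) = (\<Sum>N. (1 / real n) ^ N * (T (Suc N) - T N) * x ^ N) + T 0"
    by (simp add: g_def)
  show ?thesis
  proof (cases j)
    case 0
    then show ?thesis using main unfolding b_def by (simp add: T_def M_0)
  next
    case (Suc j')
    have T0: "T 0 = 0" by (simp add: T_def Suc)
    have "(\<lambda>N. (1 / real n) ^ N * (T (Suc N) - T N) * x ^ N) = (\<lambda>N. cf j' (n - 1) N * x ^ N)"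
    proof (rule ext)
      fix N
      have "T (Suc N) - T N = wn n 0 ^ N / real N * Tsum (wn (n - 1)) j' N"
        unfolding T_def Suc Tsum_Suc_diff using wn_shift[of n] n by simp
      moreover have "(1 / real n) ^ N * wn n 0 ^ N = (1 / real (n - 1)) ^ N"
        using npos n by (simp add: wn_0 power_mult_distrib[symmetric] of_nat_diff)
      ultimately show "(1 / real n) ^ N * (T (Suc N) - T N) * x ^ N = cf j' (n - 1) N * x ^ N"
        by (simp add: cf_def)
    qed
    moreover have "M j (n - 1) x = (\<Sum>N. cf j' (n - 1) N * x ^ N)"
      unfolding Suc by (rule M_series) (use x0 x1 jn Suc in auto)
    moreover have beq: "b = (\<lambda>N. diffs (cf j n) N * x ^ N)" by (rule ext) (simp add: b_def)
    ultimately show ?thesis using main T0 unfolding beq by simp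
  qed
qed

lemma M_integral:
  assumes jm: "Suc j \<le> m - 1" and y0: "0 \<le> y" and y1: "y \<le> 1"
  shows "((\<lambda>t. M j (m - 1) t / (real m - t)) has_integral M (Suc j) m y) {0..y}"
proof -
  define P where "P x = (\<Sum>N. cf j m N * x ^ N)" for x
  define P' where "P' x = (\<Sum>N. diffs (cf j m) N * x ^ N)" for x
  have D: "(P has_real_derivative P' t) (at t)" if "\<bar>t\<bar> < 3/2" for t
    unfolding P_def[abs_def] P'_def by (rule P_deriv[OF jm that])
  have cont: "continuous_on {0..y} P"
    by (intro continuous_at_imp_continuous_on ballI DERIV_isCont[OF D]) (use y1 in auto)
  have "(P' has_integral P y - P 0) {0..y}"
  proof (rule fundamental_theorem_of_calculus_interior[OF y0 cont])
    fix t assume "t \<in> {0<..<y}"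
    then have "\<bar>t\<bar> < 3/2" using y1 by auto
    then show "(P has_vector_derivative P' t) (at t)"
      using D has_real_derivative_iff_has_vector_derivative by blast
  qed
  moreover have "P 0 = 0" by (simp add: P_def cf_0)
  moreover have "P y = M (Suc j) m y" unfolding P_def by (rule M_series[symmetric]) (use y0 y1 jm in auto)
  ultimately have I: "(P' has_integral M (Suc j) m y) {0..y}" by simp
  show ?thesis
  proof (rule has_integral_eq[OF _ I])
    fix t assume t: "t \<in> {0..y}"
    have "real m \<ge> 2" using jm by simp
    then have pos: "real m - t > 0" using t y1 by auto
    have "P' t * (real m - t) = M j (m - 1) t" unfolding P'_def by (rule ident) (use jm t y1 in auto)
    then show "P' t = M j (m - 1) t / (real m - t)" using pos by (simp add: field_simps)
  qed
qed




lemma main_sum: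
  assumes "1 \<le> n" "0 \<le> y" "y \<le> 1"
  shows "sigma_b (real n - y) = (\<Sum>j<n. (-1) ^ j * sigma_b (real n - real j) * M j n y)"
  using assms
proof (induction n arbitrary: y)
  case 0 then show ?case by simp
next
  case (Suc n)
  show ?case
  proof (cases "n = 0")
    case True
    then show ?thesis using Suc.prems by (simp add: sigma_01 M_0)
  next
    case False
    then have n1: "1 \<le> n" by simp
    have y0: "0 \<le> y" and y1: "y \<le> 1" using Suc.prems by auto
    define m where "m = Suc n"
    define f where "f t = sigma_b (real m - t)" for t
    define h where "h t = sigma_b (real m - t - 1) / (real m - t) * (- 1)" for t
    have fc: "continuous_on {0..y} f"
    proof -
      have "continuous_on {0..y} (\<lambda>t. real m - t)" by (intro continuous_intros)
      moreover have "(\<lambda>t. real m - t) ` {0..y} \<subseteq> {0..}" using y1 n1 by (auto simp: m_def)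
      ultimately show ?thesis unfolding f_def by (rule continuous_on_compose2[OF sigma_cont])
    qed
    have fd: "(f has_vector_derivative h t) (at t)" if t: "t \<in> {0<..<y}" for t
    proof -
      have gt: "real m - t > 1" using t y1 n1 by (auto simp: m_def)
      have d1: "((\<lambda>t. real m - t) has_real_derivative - 1) (at t)" by (auto intro!: derivative_eq_intros)
      have "(f has_real_derivative h t) (at t)"
        unfolding f_def h_def using DERIV_chain2[OF sigma_deriv[OF gt] d1] by simp
      then show ?thesis using has_real_derivative_iff_has_vector_derivative by blast
    qed
    have I1: "(h has_integral f y - f 0) {0..y}"
      by (rule fundamental_theorem_of_calculus_interior[OF y0 fc fd])
    define c where "c j = (-1) ^ j * sigma_b (real n - real j) * (- 1)" for j
    have I2: "((\<lambda>t. \<Sum>j<n. c j * (M j n t / (real m - t))) has_integral (\<Sum>j<n. c j * M (Suc j) m y)) {0..y}"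
    proof (rule has_integral_sum)
      fix j assume "j \<in> {..<n}"
      then have "Suc j \<le> m - 1" by (simp add: m_def)
      from M_integral[OF this y0 y1]
      have "((\<lambda>t. M j n t / (real m - t)) has_integral M (Suc j) m y) {0..y}" by (simp add: m_def)
      then show "((\<lambda>t. c j * (M j n t / (real m - t))) has_integral c j * M (Suc j) m y) {0..y}"
        by (rule has_integral_mult_right)
    qed simp
    have I3: "(h has_integral (\<Sum>j<n. c j * M (Suc j) m y)) {0..y}"
    proof (rule has_integral_eq[OF _ I2])
      fix t assume t: "t \<in> {0..y}"
      have "sigma_b (real n - t) = (\<Sum>j<n. (-1) ^ j * sigma_b (real n - real j) * M j n t)"
        by (rule Suc.IH) (use n1 t y1 in auto)
      then have "h t = (\<Sum>j<n. (-1) ^ j * sigma_b (real n - real j) * M j n t) / (real m - t) * (- 1)"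
        by (simp add: h_def m_def)
      also have "\<dots> = (\<Sum>j<n. c j * (M j n t / (real m - t)))"
        by (simp add: c_def sum_divide_distrib sum_distrib_right sum_negf)
      finally show "(\<Sum>j<n. c j * (M j n t / (real m - t))) = h t" by simp
    qed
    have E: "f y - f 0 = (\<Sum>j<n. c j * M (Suc j) m y)" by (rule has_integral_unique[OF I1 I3])
    have "(\<Sum>j<Suc n. (-1) ^ j * sigma_b (real (Suc n) - real j) * M j (Suc n) y)
        = sigma_b (real m) + (\<Sum>j<n. (-1) ^ Suc j * sigma_b (real m - real (Suc j)) * M (Suc j) m y)"
      unfolding m_def by (subst sum.lessThan_Suc_shift) (simp add: M_0 del: of_nat_Suc)
    also have "(\<Sum>j<n. (-1) ^ Suc j * sigma_b (real m - real (Suc j)) * M (Suc j) m y) = (\<Sum>j<n. c j * M (Suc j) m y)"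
      by (rule sum.cong[OF refl]) (simp add: c_def m_def)
    also have "sigma_b (real m) + \<dots> = f y" using E by (simp add: f_def)
    finally show ?thesis by (simp add: f_def m_def)
  qed
qed

theorem theorem2:
  fixes n :: nat and y :: real
  assumes "n \<ge> 1" and "0 \<le> y" and "y \<le> 1"
  shows "sigma_b (real n - y) =
           sigma_b (real n) + (\<Sum>j=1..n-1. (-1) ^ j * sigma_b (real n - real j) * M j n y)"
proof -
  obtain k where k: "n = Suc k" using assms(1) by (cases n) auto
  have "sigma_b (real n - y) = (\<Sum>j<n. (-1) ^ j * sigma_b (real n - real j) * M j n y)"
    by (rule main_sum[OF assms])
  also have "\<dots> = sigma_b (real n) + (\<Sum>j<k. (-1) ^ Suc j * sigma_b (real n - real (Suc j)) * M (Suc j) n y)"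
    unfolding k by (subst sum.lessThan_Suc_shift) (simp add: M_0 del: of_nat_Suc)
  also have "(\<Sum>j<k. (-1) ^ Suc j * sigma_b (real n - real (Suc j)) * M (Suc j) n y)
      = (\<Sum>j=1..n-1. (-1) ^ j * sigma_b (real n - real j) * M j n y)"
    unfolding k by (simp add: sum.atLeast1_atMost_eq del: of_nat_Suc)
  finally show ?thesis .
qed


end
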